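(* Let $W=x_1^{a_1}+\dots+x_N^{a_N}$ with all $a_i>2$. The genus-zero potentials $\mathcal F^{\rm FJRW}_{0,W}$ and $\mathcal F^{\rm SG}_{0,W^T,\zeta}$ are each completely determined (via the pairing, the ring structure, the dimension and integer-degree vanishing conditions, and the WDVV equations) by the Frobenius algebra structure and the correlators $\langle x_j,x_j,x_j^{a_j-2},\prod_{i=1}^Nx_i^{a_i-2}\rangle$, $j=1,\dots,N$ (on the A-side, with insertions replaced by their images under Krawitz's map $\Psi$).
   Context: Here $W^T=W$. $\mathcal F^{\rm FJRW}_{0,W}$ is the genus-zero primary FJRW prepotential of $(W,G_W)$, $G_W$ the maximal diagonal symmetry group; $\mathcal F^{\rm SG}_{0,W^T,\zeta}$ is the Saito–Givental prepotential (in flat coordinates) of the primitive form $\zeta$ associated with the standard good basis $\{\prod x_i^{r_i}d^Nx: 0\le r_i\le a_i-2\}$. $\Psi:\mathrm{Jac}(W)\to\mathcal H_W$ is Krawitz's Frobenius algebra isomorphism, $\Psi(x_i)$ = generator of the narrow sector $\rho_iJ_W$, where $\rho_i=(1,\dots,e^{2\pi\sqrt{-1}/a_i},\dots,1)$ and $J_W=(e^{2\pi\sqrt{-1}/a_1},\dots,e^{2\pi\sqrt{-1}/a_N})$. The WDVV equations give, for any insertions, $\langle\xi_1,\dots,\xi_{k-3},\gamma,\delta,\epsilon\star\phi\rangle=\langle\xi,\gamma,\epsilon,\delta\star\phi\rangle+\langle\xi,\gamma\star\epsilon,\delta,\phi\rangle-\langle\xi,\gamma\star\delta,\epsilon,\phi\rangle+S$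 with $S$ a combination of correlators with fewer than $k$ insertions ($S=0$ if $k=4$). *)

theory Defs
  imports Complex_Main "HOL-Library.Multiset"
begin

text \<open>Fermat polynomial W = x_0^(a 0) + ... + x_(N-1)^(a (N-1)).
  A basis element of Jac(W) (resp. its image under Krawitz's map Psi in the
  FJRW state space) is the monomial x^r, encoded by its exponent vector
  r :: nat => nat with 0 <= r i <= a i - 2 for i < N and r i = 0 for i >= N.\<close>

definition fbasis :: "nat \<Rightarrow> (nat \<Rightarrow> nat) \<Rightarrow> (nat \<Rightarrow> nat) set" where
  "fbasis N a = {r. (\<forall>i<N. r i \<le> a i - 2) \<and> (\<forall>i\<ge>N. r i = 0)}"

definition funit :: "nat \<Rightarrow> nat" where "funit = (\<lambda>_. 0)"

definition fxpow :: "nat \<Rightarrow> nat \<Rightarrow> (nat \<Rightarrow> nat)" where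
  "fxpow j k = (\<lambda>i. if i = j then k else 0)"

definition ftop :: "nat \<Rightarrow> (nat \<Rightarrow> nat) \<Rightarrow> (nat \<Rightarrow> nat)" where
  "ftop N a = (\<lambda>i. if i < N then a i - 2 else 0)"

text \<open>Degree of x^r (weights q_i = 1/a_i) and central charge c-hat.\<close>
definition fdeg :: "nat \<Rightarrow> (nat \<Rightarrow> nat) \<Rightarrow> (nat \<Rightarrow> nat) \<Rightarrow> rat" where
  "fdeg N a r = (\<Sum>i<N. of_nat (r i) / of_nat (a i))"

definition fchat :: "nat \<Rightarrow> (nat \<Rightarrow> nat) \<Rightarrow> rat" where
  "fchat N a = (\<Sum>i<N. 1 - 2 / of_nat (a i))"

text \<open>Genus-zero primary correlators are encoded as a function on multisets of
  basis elements (symmetry of correlators); the value on a multiset M with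
  size M >= 3 is the correlator with insertions M (Taylor coefficient of the
  potential, up to the symmetry factor).
  The Frobenius algebra structure: pairing eta(x^r, x^s) = c if r + s = top,
  else 0 (c \<noteq> 0), product x^r * x^s = x^(r+s) if r+s stays in the basis,
  else 0.  Hence the three-point correlators are
  <x^r, x^s, x^t> = eta(x^r * x^s, x^t) = c * [r + s + t = top].\<close>

definition three_point :: "nat \<Rightarrow> (nat \<Rightarrow> nat) \<Rightarrow> complex \<Rightarrow>
    (nat \<Rightarrow> nat) \<Rightarrow> (nat \<Rightarrow> nat) \<Rightarrow> (nat \<Rightarrow> nat) \<Rightarrow> complex" where
  "three_point N a c r s t = (if (\<lambda>i. r i + s i + t i) = ftop N a then c else 0)"

text \<open>Dual basis element with respect to eta: eta^(e,f) = (1/c) [e + f = top].\<close>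
definition fdual :: "nat \<Rightarrow> (nat \<Rightarrow> nat) \<Rightarrow> (nat \<Rightarrow> nat) \<Rightarrow> (nat \<Rightarrow> nat)" where
  "fdual N a e = (\<lambda>i. ftop N a i - e i)"

definition subins :: "'b list \<Rightarrow> nat set \<Rightarrow> 'b multiset" where
  "subins xs I = image_mset (\<lambda>k. xs ! k) (mset_set I)"

definition wdvv_side :: "nat \<Rightarrow> (nat \<Rightarrow> nat) \<Rightarrow> complex \<Rightarrow> ((nat \<Rightarrow> nat) multiset \<Rightarrow> complex) \<Rightarrow>
   (nat \<Rightarrow> nat) list \<Rightarrow> (nat \<Rightarrow> nat) \<Rightarrow> (nat \<Rightarrow> nat) \<Rightarrow> (nat \<Rightarrow> nat) \<Rightarrow> (nat \<Rightarrow> nat) \<Rightarrow> complex" where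
  "wdvv_side N a c corr xs al be ga de =
     (\<Sum>I\<in>Pow {..<length xs}. \<Sum>e\<in>fbasis N a.
        corr (subins xs I + {#al, be, e#}) * (1 / c) *
        corr (subins xs ({..<length xs} - I) + {#fdual N a e, ga, de#}))"

text \<open>A genus-zero correlator system for the Fermat Frobenius algebra with pairing
  constant c, satisfying: the ring structure (3-point correlators), the flat
  identity / string axiom, the dimension (degree) axiom, the integer-degree
  (selection rule) axiom, and WDVV.\<close>
definition fermat_g0_system :: "nat \<Rightarrow> (nat \<Rightarrow> nat) \<Rightarrow> complex \<Rightarrow>
    ((nat \<Rightarrow> nat) multiset \<Rightarrow> complex) \<Rightarrow> bool" where
  "fermat_g0_system N a c corr \<longleftrightarrow>
     (\<forall>r\<in>fbasis N a. \<forall>s\<in>fbasis N a. \<forall>t\<in>fbasis N a.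
        corr {#r, s, t#} = three_point N a c r s t) \<and>
     (\<forall>M. set_mset M \<subseteq> fbasis N a \<and> size M \<ge> 3 \<longrightarrow> corr (add_mset funit M) = 0) \<and>
     (\<forall>M. set_mset M \<subseteq> fbasis N a \<and> size M \<ge> 3 \<and> corr M \<noteq> 0 \<longrightarrow>
        (\<Sum>r\<in>#M. fdeg N a r) = fchat N a + of_nat (size M) - 3) \<and>
     (\<forall>M. set_mset M \<subseteq> fbasis N a \<and> size M \<ge> 3 \<and> corr M \<noteq> 0 \<longrightarrow>
        (\<forall>i<N. a i dvd (\<Sum>r\<in>#M. r i) + 2)) \<and>
     (\<forall>xs al be ga de. set xs \<subseteq> fbasis N a \<and>
        al \<in> fbasis N a \<and> be \<in> fbasis N a \<and> ga \<in> fbasis N a \<and> de \<in> fbasis N a \<longrightarrow>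
        wdvv_side N a c corr xs al be ga de = wdvv_side N a c corr xs al ga be de)"

end

theory Submission
  imports Defs
begin

definition vadd :: "(nat\<Rightarrow>nat) \<Rightarrow> (nat\<Rightarrow>nat) \<Rightarrow> nat\<Rightarrow>nat" where
  "vadd x y = (\<lambda>i. x i + y i)"

definition vsz :: "nat \<Rightarrow> (nat\<Rightarrow>nat) \<Rightarrow> nat" where
  "vsz N r = (\<Sum>i<N. r i)"

lemma fbasis_iff: "r \<in> fbasis N a \<longleftrightarrow> (\<forall>i<N. r i \<le> a i - 2) \<and> (\<forall>i\<ge>N. r i = 0)"
  by (simp add: fbasis_def)

lemma finite_fbasis: "finite (fbasis N a)"
proof -
  have "fbasis N a \<subseteq> {f. \<forall>x. (x \<in> {..<N} \<longrightarrow> f x \<in> {..(\<Sum>i<N. a i)}) \<and> (x \<notin> {..<N} \<longrightarrow> f x = 0)}"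
  proof
    fix f assume f: "f \<in> fbasis N a"
    have "\<forall>x<N. f x \<le> (\<Sum>i<N. a i)"
    proof (intro allI impI)
      fix x assume x: "x < N"
      have "f x \<le> a x" using f x by (auto simp: fbasis_def intro: order_trans)
      also have "a x \<le> (\<Sum>i<N. a i)" using x by (intro member_le_sum) auto
      finally show "f x \<le> (\<Sum>i<N. a i)" .
    qed
    then show "f \<in> {f. \<forall>x. (x \<in> {..<N} \<longrightarrow> f x \<in> {..(\<Sum>i<N. a i)}) \<and> (x \<notin> {..<N} \<longrightarrow> f x = 0)}"
      using f by (auto simp: fbasis_def)
  qed
  moreover have "finite {f. \<forall>x. (x \<in> {..<N} \<longrightarrow> f x \<in> {..(\<Sum>i<N. a i)}) \<and> (x \<notin> {..<N} \<longrightarrow> (f::nat\<Rightarrow>nat) x = 0)}"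
    by (rule finite_set_of_finite_funs) auto
  ultimately show ?thesis by (rule finite_subset)
qed

lemma fdual_in: "e \<in> fbasis N a \<Longrightarrow> fdual N a e \<in> fbasis N a"
  by (auto simp: fbasis_def fdual_def ftop_def)

lemma fdual_fdual: "e \<in> fbasis N a \<Longrightarrow> fdual N a (fdual N a e) = e"
  by (auto simp: fbasis_def fdual_def ftop_def fun_eq_iff)

lemma vadd_in_iff: "x \<in> fbasis N a \<Longrightarrow> y \<in> fbasis N a \<Longrightarrow>
   vadd x y \<in> fbasis N a \<longleftrightarrow> (\<forall>i<N. x i + y i \<le> a i - 2)"
  by (auto simp: fbasis_def vadd_def)

lemma tp_left:
  assumes "al \<in> fbasis N a" "be \<in> fbasis N a" "e \<in> fbasis N a"
  shows "(\<lambda>i. al i + be i + e i) = ftop N a \<longleftrightarrow>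
         (vadd al be \<in> fbasis N a \<and> e = fdual N a (vadd al be))"
proof
  assume h: "(\<lambda>i. al i + be i + e i) = ftop N a"
  have h': "\<And>i. al i + be i + e i = ftop N a i" using h by (simp add: fun_eq_iff)
  have "vadd al be \<in> fbasis N a"
    using h' assms unfolding fbasis_def vadd_def ftop_def
    by (auto, metis le_add1 le_add2 add.commute less_not_refl2 )
  moreover have "e = fdual N a (vadd al be)"
  proof
    fix i show "e i = fdual N a (vadd al be) i"
      using h'[of i] by (simp add: fdual_def vadd_def)
  qed
  ultimately show "vadd al be \<in> fbasis N a \<and> e = fdual N a (vadd al be)" by simp
next
  assume "vadd al be \<in> fbasis N a \<and> e = fdual N a (vadd al be)"
  then show "(\<lambda>i. al i + be i + e i) = ftop N a"
    by (auto simp: fun_eq_iff fbasis_def vadd_def fdual_def ftop_def)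
qed

lemma tp_right:
  assumes "ga \<in> fbasis N a" "de \<in> fbasis N a" "e \<in> fbasis N a"
  shows "(\<lambda>i. fdual N a e i + ga i + de i) = ftop N a \<longleftrightarrow>
         (vadd ga de \<in> fbasis N a \<and> e = vadd ga de)"
proof
  assume h: "(\<lambda>i. fdual N a e i + ga i + de i) = ftop N a"
  have h': "\<And>i. fdual N a e i + ga i + de i = ftop N a i" using h by (simp add: fun_eq_iff)
  have ee: "e = vadd ga de"
  proof
    fix i show "e i = vadd ga de i"
      using h'[of i] assms(3) by (cases "i < N") (auto simp: fdual_def vadd_def ftop_def fbasis_def)
  qed
  then show "vadd ga de \<in> fbasis N a \<and> e = vadd ga de" using assms(3) by simp
next
  assume "vadd ga de \<in> fbasis N a \<and> e = vadd ga de"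
  then show "(\<lambda>i. fdual N a e i + ga i + de i) = ftop N a"
    by (auto simp: fun_eq_iff fbasis_def vadd_def fdual_def ftop_def)
qed


lemma subins_empty[simp]: "subins xs {} = {#}"
  by (simp add: subins_def)

lemma subins_all: "subins xs {..<length xs} = mset xs"
proof -
  have "subins xs {..<length xs} = image_mset (nth xs) (mset [0..<length xs])"
    by (simp add: subins_def mset_set_upto_eq_mset_upto)
  also have "\<dots> = mset (map (nth xs) [0..<length xs])" by simp
  also have "\<dots> = mset xs" by (simp add: map_nth)
  finally show ?thesis .
qed

lemma subins_size: "finite I \<Longrightarrow> size (subins xs I) = card I"
  by (simp add: subins_def)

lemma subins_set: "I \<subseteq> {..<length xs} \<Longrightarrow> set_mset (subins xs I) \<subseteq> set xs"
  unfolding subins_def by (auto dest!: elem_mset_set[THEN iffD1, rotated] intro!: nth_mem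
       simp: finite_subset[OF _ finite_lessThan])

lemma sys_3pt: "fermat_g0_system N a c corr \<Longrightarrow> r \<in> fbasis N a \<Longrightarrow> s \<in> fbasis N a \<Longrightarrow>
   t \<in> fbasis N a \<Longrightarrow> corr {#r, s, t#} = three_point N a c r s t"
  by (simp add: fermat_g0_system_def)

lemma F_empty:
  assumes sys: "fermat_g0_system N a c corr" and c: "c \<noteq> 0"
    and S: "al \<in> fbasis N a" "be \<in> fbasis N a" "ga \<in> fbasis N a" "de \<in> fbasis N a"
  shows "(\<Sum>e\<in>fbasis N a. corr (subins xs {} + {#al, be, e#}) * (1 / c) *
            corr (subins xs ({..<length xs} - {}) + {#fdual N a e, ga, de#}))
        = (if vadd al be \<in> fbasis N a then corr (mset xs + {#vadd al be, ga, de#}) else 0)"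
proof -
  let ?e0 = "fdual N a (vadd al be)"
  let ?X = "\<lambda>e. corr (mset xs + {#fdual N a e, ga, de#})"
  have "(\<Sum>e\<in>fbasis N a. corr (subins xs {} + {#al, be, e#}) * (1 / c) *
            corr (subins xs ({..<length xs} - {}) + {#fdual N a e, ga, de#}))
      = (\<Sum>e\<in>fbasis N a. if e = ?e0 then (if vadd al be \<in> fbasis N a then ?X e else 0) else 0)"
  proof (rule sum.cong[OF refl])
    fix e assume e: "e \<in> fbasis N a"
    show "corr (subins xs {} + {#al, be, e#}) * (1 / c) *
            corr (subins xs ({..<length xs} - {}) + {#fdual N a e, ga, de#})
        = (if e = ?e0 then (if vadd al be \<in> fbasis N a then ?X e else 0) else 0)"
      using sys_3pt[OF sys S(1,2) e] tp_left[OF S(1,2) e] c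
      by (auto simp: three_point_def subins_all)
  qed
  also have "\<dots> = (if ?e0 \<in> fbasis N a then (if vadd al be \<in> fbasis N a then ?X ?e0 else 0) else 0)"
    by (rule sum.delta[OF finite_fbasis])
  also have "\<dots> = (if vadd al be \<in> fbasis N a then corr (mset xs + {#vadd al be, ga, de#}) else 0)"
    using fdual_in fdual_fdual by auto
  finally show ?thesis .
qed

lemma F_all:
  assumes sys: "fermat_g0_system N a c corr" and c: "c \<noteq> 0"
    and S: "al \<in> fbasis N a" "be \<in> fbasis N a" "ga \<in> fbasis N a" "de \<in> fbasis N a"
  shows "(\<Sum>e\<in>fbasis N a. corr (subins xs {..<length xs} + {#al, be, e#}) * (1 / c) *
            corr (subins xs ({..<length xs} - {..<length xs}) + {#fdual N a e, ga, de#}))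
        = (if vadd ga de \<in> fbasis N a then corr (mset xs + {#al, be, vadd ga de#}) else 0)"
proof -
  let ?e0 = "vadd ga de"
  let ?X = "\<lambda>e. corr (mset xs + {#al, be, e#})"
  have "(\<Sum>e\<in>fbasis N a. corr (subins xs {..<length xs} + {#al, be, e#}) * (1 / c) *
            corr (subins xs ({..<length xs} - {..<length xs}) + {#fdual N a e, ga, de#}))
      = (\<Sum>e\<in>fbasis N a. if e = ?e0 then (if vadd ga de \<in> fbasis N a then ?X e else 0) else 0)"
  proof (rule sum.cong[OF refl])
    fix e assume e: "e \<in> fbasis N a"
    show "corr (subins xs {..<length xs} + {#al, be, e#}) * (1 / c) *
            corr (subins xs ({..<length xs} - {..<length xs}) + {#fdual N a e, ga, de#})
        = (if e = ?e0 then (if vadd ga de \<in> fbasis N a then ?X e else 0) else 0)"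
      using sys_3pt[OF sys fdual_in[OF e] S(3,4)] tp_right[OF S(3,4) e] c e
      by (auto simp: three_point_def subins_all)
  qed
  also have "\<dots> = (if ?e0 \<in> fbasis N a then (if vadd ga de \<in> fbasis N a then ?X ?e0 else 0) else 0)"
    by (rule sum.delta[OF finite_fbasis])
  also have "\<dots> = (if vadd ga de \<in> fbasis N a then corr (mset xs + {#al, be, vadd ga de#}) else 0)"
    by auto
  finally show ?thesis .
qed


definition Fs :: "nat \<Rightarrow> (nat \<Rightarrow> nat) \<Rightarrow> complex \<Rightarrow> ((nat \<Rightarrow> nat) multiset \<Rightarrow> complex) \<Rightarrow>
   (nat \<Rightarrow> nat) list \<Rightarrow> (nat \<Rightarrow> nat) \<Rightarrow> (nat \<Rightarrow> nat) \<Rightarrow> (nat \<Rightarrow> nat) \<Rightarrow> (nat \<Rightarrow> nat) \<Rightarrow> nat set \<Rightarrow> complex" where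
  "Fs N a c corr xs al be ga de I = (\<Sum>e\<in>fbasis N a.
        corr (subins xs I + {#al, be, e#}) * (1 / c) *
        corr (subins xs ({..<length xs} - I) + {#fdual N a e, ga, de#}))"

lemma wdvv_decomp:
  assumes sys: "fermat_g0_system N a c corr" and c: "c \<noteq> 0" and xs: "xs \<noteq> []"
    and S: "al \<in> fbasis N a" "be \<in> fbasis N a" "ga \<in> fbasis N a" "de \<in> fbasis N a"
  shows "wdvv_side N a c corr xs al be ga de =
     (if vadd al be \<in> fbasis N a then corr (mset xs + {#vadd al be, ga, de#}) else 0) +
     (if vadd ga de \<in> fbasis N a then corr (mset xs + {#al, be, vadd ga de#}) else 0) +
     sum (Fs N a c corr xs al be ga de) (Pow {..<length xs} - {{}, {..<length xs}})"
proof -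
  let ?F = "Fs N a c corr xs al be ga de"
  let ?A = "Pow {..<length xs}"
  have ne: "{} \<noteq> {..<length xs}" using xs by auto
  have "wdvv_side N a c corr xs al be ga de = sum ?F ?A"
    by (simp add: wdvv_side_def Fs_def)
  also have "\<dots> = ?F {} + sum ?F (?A - {{}})"
    by (rule sum.remove) auto
  also have "sum ?F (?A - {{}}) = ?F {..<length xs} + sum ?F (?A - {{}} - {{..<length xs}})"
    using ne by (intro sum.remove) auto
  also have "?A - {{}} - {{..<length xs}} = ?A - {{}, {..<length xs}}" by auto
  finally show ?thesis
    using F_empty[OF sys c S, of xs] F_all[OF sys c S, of xs] by (simp add: Fs_def)
qed

definition Qd :: "nat \<Rightarrow> (nat \<Rightarrow> nat) \<Rightarrow> ((nat \<Rightarrow> nat) multiset \<Rightarrow> complex) \<Rightarrow> ((nat \<Rightarrow> nat) multiset \<Rightarrow> complex) \<Rightarrow>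
   (nat \<Rightarrow> nat) list \<Rightarrow> (nat \<Rightarrow> nat) \<Rightarrow> (nat \<Rightarrow> nat) \<Rightarrow> (nat \<Rightarrow> nat) \<Rightarrow> complex" where
  "Qd N a corr1 corr2 xs x y z = (if x \<in> fbasis N a \<and> y \<in> fbasis N a \<and> z \<in> fbasis N a
     then corr1 (mset xs + {#x, y, z#}) - corr2 (mset xs + {#x, y, z#}) else 0)"

lemma Fs_eq:
  assumes IH: "\<forall>M. set_mset M \<subseteq> fbasis N a \<and> 3 \<le> size M \<and> size M < length xs + 3 \<longrightarrow> corr1 M = corr2 M"
    and xsS: "set xs \<subseteq> fbasis N a"
    and S: "al \<in> fbasis N a" "be \<in> fbasis N a" "ga \<in> fbasis N a" "de \<in> fbasis N a"
    and I: "I \<in> Pow {..<length xs} - {{}, {..<length xs}}"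
  shows "Fs N a c corr1 xs al be ga de I = Fs N a c corr2 xs al be ga de I"
  unfolding Fs_def
proof (rule sum.cong[OF refl])
  fix e assume e: "e \<in> fbasis N a"
  have Isub: "I \<subseteq> {..<length xs}" and Ine: "I \<noteq> {}" and Inall: "I \<noteq> {..<length xs}" using I by auto
  have fI: "finite I" using Isub finite_subset by blast
  have cI: "card I < length xs" using Isub Inall
    by (metis card_lessThan card_subset_eq finite_lessThan le_neq_implies_less card_mono)
  have cI1: "card I \<ge> 1" using fI Ine by (simp add: Suc_le_eq card_gt_0_iff)
  have J: "{..<length xs} - I \<subseteq> {..<length xs}" by auto
  have cJ: "card ({..<length xs} - I) = length xs - card I"
    using Isub by (simp add: card_Diff_subset fI)
  have s1: "corr1 (subins xs I + {#al, be, e#}) = corr2 (subins xs I + {#al, be, e#})"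
  proof -
    have "set_mset (subins xs I) \<subseteq> fbasis N a" using subins_set[OF Isub] xsS by blast
    then show ?thesis
      using IH[rule_format, of "subins xs I + {#al, be, e#}"] S e subins_size[OF fI, of xs] cI cI1 by auto
  qed
  have s2: "corr1 (subins xs ({..<length xs} - I) + {#fdual N a e, ga, de#}) =
            corr2 (subins xs ({..<length xs} - I) + {#fdual N a e, ga, de#})"
  proof -
    have "set_mset (subins xs ({..<length xs} - I)) \<subseteq> fbasis N a" using subins_set[OF J] xsS by blast
    then show ?thesis
      using IH[rule_format, of "subins xs ({..<length xs} - I) + {#fdual N a e, ga, de#}"]
        S fdual_in[OF e] subins_size[of "{..<length xs} - I" xs] cJ cI cI1
      by auto
  qed
  show "corr1 (subins xs I + {#al, be, e#}) * (1 / c) *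
          corr1 (subins xs ({..<length xs} - I) + {#fdual N a e, ga, de#}) =
        corr2 (subins xs I + {#al, be, e#}) * (1 / c) *
          corr2 (subins xs ({..<length xs} - I) + {#fdual N a e, ga, de#})"
    using s1 s2 by simp
qed

lemma rel:
  assumes sys1: "fermat_g0_system N a c corr1" and sys2: "fermat_g0_system N a c corr2"
    and c: "c \<noteq> 0" and xs: "xs \<noteq> []" and xsS: "set xs \<subseteq> fbasis N a"
    and S: "al \<in> fbasis N a" "be \<in> fbasis N a" "ga \<in> fbasis N a" "de \<in> fbasis N a"
    and IH: "\<forall>M. set_mset M \<subseteq> fbasis N a \<and> 3 \<le> size M \<and> size M < length xs + 3 \<longrightarrow> corr1 M = corr2 M"
  shows "Qd N a corr1 corr2 xs (vadd al be) ga de + Qd N a corr1 corr2 xs al be (vadd ga de) =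
         Qd N a corr1 corr2 xs (vadd al ga) be de + Qd N a corr1 corr2 xs al ga (vadd be de)"
proof -
  have w1: "wdvv_side N a c corr1 xs al be ga de = wdvv_side N a c corr1 xs al ga be de"
    using sys1 xsS S unfolding fermat_g0_system_def by blast
  have w2: "wdvv_side N a c corr2 xs al be ga de = wdvv_side N a c corr2 xs al ga be de"
    using sys2 xsS S unfolding fermat_g0_system_def by blast
  have R1: "sum (Fs N a c corr1 xs al be ga de) (Pow {..<length xs} - {{}, {..<length xs}})
          = sum (Fs N a c corr2 xs al be ga de) (Pow {..<length xs} - {{}, {..<length xs}})"
    by (rule sum.cong[OF refl], rule Fs_eq[OF IH xsS S])
  have R2: "sum (Fs N a c corr1 xs al ga be de) (Pow {..<length xs} - {{}, {..<length xs}})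
          = sum (Fs N a c corr2 xs al ga be de) (Pow {..<length xs} - {{}, {..<length xs}})"
    by (rule sum.cong[OF refl], rule Fs_eq[OF IH xsS S(1,3,2,4)])
  note d11 = wdvv_decomp[OF sys1 c xs S]
  note d12 = wdvv_decomp[OF sys1 c xs S(1,3,2,4)]
  note d21 = wdvv_decomp[OF sys2 c xs S]
  note d22 = wdvv_decomp[OF sys2 c xs S(1,3,2,4)]
  have lin: "\<And>a b r a' b' r' c d s c' d' s' :: complex.
     a+b+r = a'+b'+r' \<Longrightarrow> c+d+s = c'+d'+s' \<Longrightarrow> r = s \<Longrightarrow> r' = s' \<Longrightarrow>
     (a-c)+(b-d) = (a'-c')+(b'-d')"
  proof -
    fix a b r a' b' r' c d s c' d' s' :: complex
    assume h: "a+b+r = a'+b'+r'" "c+d+s = c'+d'+s'" "r = s" "r' = s'"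
    have "(a-c)+(b-d) = (a+b+r) - (c+d+s)" using h(3) by (simp add: algebra_simps)
    also have "\<dots> = (a'+b'+r') - (c'+d'+s')" using h(1,2) by simp
    also have "\<dots> = (a'-c')+(b'-d')" using h(4) by (simp add: algebra_simps)
    finally show "(a-c)+(b-d) = (a'-c')+(b'-d')" .
  qed
  have ifd: "\<And>P (x::complex) y. (if P then x else 0) - (if P then y else 0) = (if P then x - y else 0)"
    by simp
  have q: "\<And>x y z. x \<in> fbasis N a \<Longrightarrow> y \<in> fbasis N a \<Longrightarrow> z \<in> fbasis N a \<Longrightarrow>
     Qd N a corr1 corr2 xs (vadd x y) z de = (if vadd x y \<in> fbasis N a then corr1 (mset xs + {#vadd x y, z, de#}) else 0)
       - (if vadd x y \<in> fbasis N a then corr2 (mset xs + {#vadd x y, z, de#}) else 0)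
     \<and> Qd N a corr1 corr2 xs x y (vadd z de) = (if vadd z de \<in> fbasis N a then corr1 (mset xs + {#x, y, vadd z de#}) else 0)
       - (if vadd z de \<in> fbasis N a then corr2 (mset xs + {#x, y, vadd z de#}) else 0)"
    using S(4) unfolding Qd_def by auto
  show ?thesis
    apply (subst conjunct1[OF q[OF S(1,2,3)]])
    apply (subst conjunct2[OF q[OF S(1,2,3)]])
    apply (subst conjunct1[OF q[OF S(1,3,2)]])
    apply (subst conjunct2[OF q[OF S(1,3,2)]])
    apply (rule lin[OF w1[unfolded d11 d12] w2[unfolded d21 d22] R1 R2])
    done
qed


lemma size3_eq:
  assumes sys1: "fermat_g0_system N a c corr1" and sys2: "fermat_g0_system N a c corr2"
    and M: "set_mset M \<subseteq> fbasis N a" "size M = 3"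
  shows "corr1 M = corr2 M"
proof -
  obtain r M1 where M1: "M = add_mset r M1" using M(2) size_eq_Suc_imp_eq_union[of M 2] by auto
  obtain s M2 where M2: "M1 = add_mset s M2" using M(2) M1 size_eq_Suc_imp_eq_union[of M1 1] by auto
  obtain t M3 where M3: "M2 = add_mset t M3" using M(2) M1 M2 size_eq_Suc_imp_eq_union[of M2 0] by auto
  have "M3 = {#}" using M(2) M1 M2 M3 by auto
  then have "M = {#r, s, t#}" using M1 M2 M3 by simp
  then show ?thesis using sys_3pt[OF sys1] sys_3pt[OF sys2] M(1) by auto
qed

lemma fxpow_in: "j < N \<Longrightarrow> k \<le> a j - 2 \<Longrightarrow> fxpow j k \<in> fbasis N a"
  by (auto simp: fbasis_def fxpow_def)

lemma chain:
  assumes sys1: "fermat_g0_system N a c corr1" and sys2: "fermat_g0_system N a c corr2"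
    and c: "c \<noteq> 0" and a: "\<forall>i<N. a i > 2" and j: "j < N"
  shows "\<forall>u v. (\<Sum>i<N. u i) = s \<longrightarrow> u \<in> fbasis N a \<longrightarrow> v \<in> fbasis N a \<longrightarrow>
     u j = a j - 2 \<longrightarrow> v j = a j - 2 \<longrightarrow> (\<forall>i<N. i \<noteq> j \<longrightarrow> u i + v i = a i - 2) \<longrightarrow>
     corr1 {#fxpow j 1, fxpow j 1, u, v#} - corr2 {#fxpow j 1, fxpow j 1, u, v#} =
     corr1 {#fxpow j 1, fxpow j 1, fxpow j (a j - 2), ftop N a#} -
     corr2 {#fxpow j 1, fxpow j 1, fxpow j (a j - 2), ftop N a#}"
proof (induction s rule: less_induct)
  case (less s)
  show ?case
  proof (intro allI impI)
    fix u v assume su: "(\<Sum>i<N. u i) = s" and uS: "u \<in> fbasis N a" and vS: "v \<in> fbasis N a"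
      and uj: "u j = a j - 2" and vj: "v j = a j - 2" and uv: "\<forall>i<N. i \<noteq> j \<longrightarrow> u i + v i = a i - 2"
    let ?ej = "fxpow j 1"
    show "corr1 {#?ej, ?ej, u, v#} - corr2 {#?ej, ?ej, u, v#} =
     corr1 {#?ej, ?ej, fxpow j (a j - 2), ftop N a#} - corr2 {#?ej, ?ej, fxpow j (a j - 2), ftop N a#}"
    proof (cases "\<exists>i<N. i \<noteq> j \<and> u i \<ge> 1")
      case False
      have "u = fxpow j (a j - 2)"
      proof
        fix i show "u i = fxpow j (a j - 2) i"
          using False uj uS by (cases "i < N") (auto simp: fxpow_def fbasis_def)
      qed
      moreover have "v = ftop N a"
      proof
        fix i show "v i = ftop N a i"
        proof (cases "i < N")
          case True
          show ?thesis
          proof (cases "i = j")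
            case False
            then have "u i = 0" using \<open>\<not> (\<exists>i<N. i \<noteq> j \<and> u i \<ge> 1)\<close> True by auto
            then show ?thesis using uv True False by (auto simp: ftop_def)
          qed (use vj True in \<open>auto simp: ftop_def\<close>)
        qed (use vS in \<open>auto simp: ftop_def fbasis_def\<close>)
      qed
      ultimately show ?thesis by simp
    next
      case True
      then obtain i where i: "i < N" "i \<noteq> j" "u i \<ge> 1" by auto
      let ?ei = "fxpow i 1"
      define ph where "ph = u(i := u i - 1)"
      have aj: "a j > 2" and ai: "a i > 2" using a j i by auto
      have ejS: "?ej \<in> fbasis N a" using j aj by (intro fxpow_in) auto
      have eiS: "?ei \<in> fbasis N a" using i ai by (intro fxpow_in) auto
      have phS: "ph \<in> fbasis N a" using uS by (auto simp: ph_def fbasis_def)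
      have ueq: "vadd ?ei ph = u" using i by (auto simp: vadd_def ph_def fxpow_def fun_eq_iff)
      have v1S: "vadd v ?ei \<in> fbasis N a"
        unfolding fbasis_iff
      proof (intro conjI allI impI)
        fix i' assume i': "i' < N"
        show "vadd v ?ei i' \<le> a i' - 2"
        proof (cases "i' = i")
          case True then show ?thesis using uv i by (auto simp: vadd_def fxpow_def)
        qed (use vS i' in \<open>auto simp: vadd_def fxpow_def fbasis_def\<close>)
      next
        fix i' assume "N \<le> i'" then show "vadd v ?ei i' = 0"
          using vS i by (auto simp: vadd_def fxpow_def fbasis_def)
      qed
      have n1: "vadd v ?ej \<notin> fbasis N a" using vj j aj by (auto simp: vadd_def fxpow_def fbasis_def)
      have n2: "vadd ?ej ph \<notin> fbasis N a" using uj j aj i by (auto simp: vadd_def fxpow_def fbasis_def ph_def)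
      have IH3: "\<forall>M. set_mset M \<subseteq> fbasis N a \<and> 3 \<le> size M \<and> size M < length [?ej] + 3 \<longrightarrow> corr1 M = corr2 M"
        using size3_eq[OF sys1 sys2] by auto
      have r: "Qd N a corr1 corr2 [?ej] (vadd v ?ej) ?ei ph + Qd N a corr1 corr2 [?ej] v ?ej (vadd ?ei ph) =
         Qd N a corr1 corr2 [?ej] (vadd v ?ei) ?ej ph + Qd N a corr1 corr2 [?ej] v ?ei (vadd ?ej ph)"
        by (rule rel[OF sys1 sys2 c _ _ vS ejS eiS phS IH3]) (use ejS in auto)
      then have r': "Qd N a corr1 corr2 [?ej] v ?ej u = Qd N a corr1 corr2 [?ej] (vadd v ?ei) ?ej ph"
        using n1 n2 ueq vS uS ejS phS v1S eiS by (simp add: Qd_def)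
      have m1: "mset [?ej] + {#v, ?ej, u#} = {#?ej, ?ej, u, v#}" by (simp add: add_mset_commute)
      have m2: "mset [?ej] + {#vadd v ?ei, ?ej, ph#} = {#?ej, ?ej, ph, vadd v ?ei#}" by (simp add: add_mset_commute)
      have lhs: "corr1 {#?ej, ?ej, u, v#} - corr2 {#?ej, ?ej, u, v#} =
                 corr1 {#?ej, ?ej, ph, vadd v ?ei#} - corr2 {#?ej, ?ej, ph, vadd v ?ei#}"
        using r' vS ejS uS v1S phS unfolding Qd_def m1 m2 by simp
      have lt: "(\<Sum>i<N. ph i) < s"
        unfolding su[symmetric]
        by (rule sum_strict_mono_ex1) (use i in \<open>auto simp: ph_def\<close>)
      have phj: "ph j = a j - 2" using uj i by (simp add: ph_def)
      have v'j: "vadd v ?ei j = a j - 2" using vj i by (simp add: vadd_def fxpow_def)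
      have uv': "\<forall>i'<N. i' \<noteq> j \<longrightarrow> ph i' + vadd v ?ei i' = a i' - 2"
        using uv i by (auto simp: ph_def vadd_def fxpow_def)
      show ?thesis
        using less.IH[OF lt, rule_format, OF refl phS v1S phj v'j] uv' lhs by simp
    qed
  qed
qed


lemma arith_core:
  fixes N k q :: nat and a n T m :: "nat \<Rightarrow> nat"
  assumes N: "N \<ge> 1" and a: "\<forall>i<N. a i \<ge> 3"
    and am: "\<forall>i<N. a i * m i = n i + T i + 2" and T: "\<forall>i<N. T i \<le> q * (a i - 2)"
    and q: "q \<le> 2" and sn: "(\<Sum>i<N. n i) + q = k" and sm: "(\<Sum>i<N. m i) + 3 = N + k"
    and k: "k \<ge> 4"
  shows "k = 4 \<and> (\<exists>j<N. n j = 4 - q \<and> T j = q * (a j - 2) \<and> (q < 2 \<longrightarrow> a j = 3) \<and>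
            (\<forall>i<N. i \<noteq> j \<longrightarrow> n i = 0 \<and> T i = a i - 2))"
proof -
  have m1: "\<forall>i<N. m i \<ge> 1"
  proof (intro allI impI)
    fix i assume "i < N" then have "a i * m i = n i + T i + 2" using am by auto
    then show "m i \<ge> 1" by (cases "m i") auto
  qed
  have intam: "\<forall>i<N. int (a i) * int (m i) = int (n i) + int (T i) + 2"
  proof (intro allI impI)
    fix i assume i: "i < N"
    have "int (a i * m i) = int (n i + T i + 2)" using am i by simp
    then show "int (a i) * int (m i) = int (n i) + int (T i) + 2" by simp
  qed
  have intT: "\<forall>i<N. int (T i) \<le> int q * (int (a i) - 2)"
  proof (intro allI impI)
    fix i assume i: "i < N"
    have "int (T i) \<le> int (q * (a i - 2))" using T i by (simp only: of_nat_le_iff)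
    also have "int (q * (a i - 2)) = int q * (int (a i) - 2)"
    proof -
      have "a i \<ge> 2" using a i by auto
      then have "int (a i - 2) = int (a i) - 2" by linarith
      then show ?thesis by simp
    qed
    finally show "int (T i) \<le> int q * (int (a i) - 2)" .
  qed
  have isn: "(\<Sum>i<N. int (n i)) + int q = int k"
  proof -
    have "int k = int ((\<Sum>i<N. n i) + q)" using sn by simp
    then show ?thesis by simp
  qed
  have ism: "(\<Sum>i<N. int (m i)) + 3 = int N + int k"
  proof -
    have "int ((\<Sum>i<N. m i) + 3) = int (N + k)" using sm by simp
    then show ?thesis by simp
  qed
  have cardN: "(\<Sum>i<N. (1::int)) = int N" by simp
  show ?thesis
  proof (cases "q = 0")
    case q0: True
    have per: "\<forall>i<N. 3 * (int (m i) - 1) + 1 \<le> int (n i)"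
    proof (intro allI impI)
      fix i assume i: "i < N"
      have e: "int (a i) * int (m i) = int (n i) + 2" using intam intT i q0 by force
      have "3 * (int (m i) - 1) \<le> int (a i) * (int (m i) - 1)"
        using a m1 i by (intro mult_right_mono) auto
      moreover have "int (a i) * (int (m i) - 1) = int (a i) * int (m i) - int (a i)" by (simp add: algebra_simps)
      moreover have "int (a i) \<ge> 3" using a i by auto
      ultimately show "3 * (int (m i) - 1) + 1 \<le> int (n i)" using e by linarith
    qed
    have "(\<Sum>i<N. 3 * (int (m i) - 1) + 1) \<le> (\<Sum>i<N. int (n i))"
      by (rule sum_mono) (use per in auto)
    also have "(\<Sum>i<N. 3 * (int (m i) - 1) + 1) = 3 * (\<Sum>i<N. int (m i)) - 2 * int N"
      by (simp add: sum.distrib sum_distrib_left sum_subtractf algebra_simps)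
    finally have ineq: "3 * (\<Sum>i<N. int (m i)) - 2 * int N \<le> (\<Sum>i<N. int (n i))" .
    have k4: "k = 4" and N1: "N = 1" using ineq isn ism q0 N k by linarith+
    have "m 0 = 2" using sm k4 N1 by simp
    moreover have "n 0 = 4" using sn k4 N1 q0 by simp
    moreover have "T 0 = 0" using T q0 N1 by auto
    ultimately have "a 0 = 3" using am N1 by auto
    then show ?thesis using k4 N1 q0 \<open>n 0 = 4\<close> \<open>T 0 = 0\<close> by auto
  next
    case qn0: False
    show ?thesis
    proof (cases "q = 1")
      case q1: True
      have per: "\<forall>i<N. int (a i) * (int (m i) - 1) \<le> int (n i)"
      proof (intro allI impI)
        fix i assume i: "i < N"
        show "int (a i) * (int (m i) - 1) \<le> int (n i)"
        proof -
          have "int (a i) * (int (m i) - 1) = int (a i) * int (m i) - int (a i)" by (simp add: algebra_simps)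
          moreover have "int (T i) \<le> int (a i) - 2" using intT[rule_format, OF i] q1 by simp
          moreover have "int (a i) * int (m i) = int (n i) + int (T i) + 2" using intam i by auto
          ultimately show ?thesis by linarith
        qed
      qed
      have per3: "\<forall>i<N. 3 * (int (m i) - 1) \<le> int (n i)"
      proof (intro allI impI)
        fix i assume i: "i < N"
        have "3 * (int (m i) - 1) \<le> int (a i) * (int (m i) - 1)"
          using a m1 i by (intro mult_right_mono) auto
        then show "3 * (int (m i) - 1) \<le> int (n i)" using per[rule_format, OF i] by linarith
      qed
      have "(\<Sum>i<N. 3 * (int (m i) - 1)) \<le> (\<Sum>i<N. int (n i))"
        by (rule sum_mono) (use per3 in auto)
      also have "(\<Sum>i<N. 3 * (int (m i) - 1)) = 3 * (\<Sum>i<N. int (m i)) - 3 * int N"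
        by (simp add: sum_distrib_left sum_subtractf algebra_simps)
      finally have ineq: "3 * (\<Sum>i<N. int (m i)) - 3 * int N \<le> (\<Sum>i<N. int (n i))" .
      have k4: "k = 4" using ineq isn ism q1 k by linarith
      have "\<exists>j<N. m j \<ge> 2"
      proof (rule ccontr)
        assume "\<not> (\<exists>j<N. m j \<ge> 2)"
        then have "\<forall>i<N. m i = 1" using m1 by force
        then have "(\<Sum>i<N. m i) = N" by simp
        then show False using sm k4 by simp
      qed
      then obtain j where j: "j < N" "m j \<ge> 2" by auto
      have "int (a j) \<le> int (a j) * (int (m j) - 1)" using mult_left_mono[of 1 "int (m j) - 1" "int (a j)"] j by simp
      then have nj3: "int (n j) \<ge> int (a j)" "int (a j) * (int (m j) - 1) \<le> int (n j)" using per j by auto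
      have snj: "(\<Sum>i<N. n i) = n j + (\<Sum>i\<in>{..<N}-{j}. n i)" using j by (simp add: sum.remove)
      have njle: "n j \<le> 3" using snj sn q1 k4 by simp
      have aj: "a j = 3" using nj3 njle a j by auto
      have nj: "n j = 3" using nj3 njle aj by auto
      have mj: "m j = 2" using nj3(2) aj nj j by auto
      have Tj: "T j = 1" using am j aj nj mj by auto
      have others0: "(\<Sum>i\<in>{..<N}-{j}. n i) = 0" using snj sn q1 k4 nj by simp
      have rest: "\<forall>i<N. i \<noteq> j \<longrightarrow> n i = 0 \<and> T i = a i - 2"
      proof (intro allI impI)
        fix i assume i: "i < N" "i \<noteq> j"
        have ni: "n i = 0" using others0 i by (simp add: sum_eq_0_iff)
        have "T i + 2 \<le> a i" using T q1 a i by force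
        then have ami: "a i * m i \<le> a i" using am i ni by simp
        have "m i \<le> 1"
        proof (rule ccontr)
          assume "\<not> m i \<le> 1"
          then have "a i * 2 \<le> a i * m i" by (intro mult_left_mono) auto
          then show False using ami a i by auto
        qed
        then have "m i = 1" using m1 i by auto
        then show "n i = 0 \<and> T i = a i - 2" using am i ni by auto
      qed
      show ?thesis using k4 j nj q1 Tj aj rest by auto
    next
      case q2': False
      have q2: "q = 2" using q qn0 q2' by auto
      have perA: "\<forall>i<N. n i = 0 \<longrightarrow> m i = 1"
      proof (intro allI impI)
        fix i assume i: "i < N" and ni: "n i = 0"
        have "int (a i) * int (m i) \<le> 2 * int (a i) - 2" using intam intT i q2 ni by force
        moreover have "int (a i) \<ge> 3" using a i by auto
        ultimately show "m i = 1"
        proof -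
          assume h1: "int (a i) * int (m i) \<le> 2 * int (a i) - 2" and h2: "int (a i) \<ge> 3"
          have "m i < 2"
          proof (rule ccontr)
            assume "\<not> m i < 2"
            then have "int (a i) * 2 \<le> int (a i) * int (m i)" using h2 by (intro mult_left_mono) auto
            then show False using h1 by linarith
          qed
          then show "m i = 1" using m1 i by auto
        qed
      qed
      have perB: "\<forall>i<N. n i \<ge> 1 \<longrightarrow> m i \<le> n i"
      proof (intro allI impI)
        fix i assume i: "i < N" and ni: "n i \<ge> 1"
        have h: "int (a i) * int (m i) \<le> int (n i) + 2 * int (a i) - 2" using intam intT i q2 by force
        show "m i \<le> n i"
        proof (rule ccontr)
          assume "\<not> m i \<le> n i"
          then have "int (m i) \<ge> int (n i) + 1" by auto
          then have "int (a i) * (int (n i) + 1) \<le> int (a i) * int (m i)" by (intro mult_left_mono) auto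
          then have "(int (a i) - 1) * int (n i) \<le> int (a i) - 2" using h by (simp add: algebra_simps)
          moreover have "(int (a i) - 1) * 1 \<le> (int (a i) - 1) * int (n i)"
            using ni a i by (intro mult_left_mono) auto
          ultimately show False by simp
        qed
      qed
      define f where "f i = int (n i) + 1 - int (m i)" for i
      have f0: "\<forall>i<N. f i \<ge> 0"
      proof (intro allI impI)
        fix i assume i: "i < N"
        show "f i \<ge> 0"
        proof (cases "n i = 0")
          case True then show ?thesis using perA i unfolding f_def by simp
        next
          case False
          then have "m i \<le> n i" using perB i by auto
          then show ?thesis unfolding f_def by simp
        qed
      qed
      have f1: "\<forall>i<N. n i \<ge> 1 \<longrightarrow> f i \<ge> 1"
      proof (intro allI impI)
        fix i assume "i < N" "n i \<ge> 1"
        then have "m i \<le> n i" using perB by auto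
        then show "f i \<ge> 1" unfolding f_def by simp
      qed
      have sf: "(\<Sum>i<N. f i) = 1" unfolding f_def using isn ism q2 by (simp add: sum.distrib sum_subtractf)
      have "(\<Sum>i<N. n i) \<ge> 2" using sn q2 k by simp
      then have "\<exists>j<N. n j \<ge> 1"
      proof -
        assume h: "(\<Sum>i<N. n i) \<ge> 2"
        show ?thesis
        proof (rule ccontr)
          assume "\<not> (\<exists>j<N. n j \<ge> 1)"
          then have "(\<Sum>i<N. n i) = 0" by (intro sum.neutral) auto
          then show False using h by simp
        qed
      qed
      then obtain j where j: "j < N" "n j \<ge> 1" by auto
      have sfj: "(\<Sum>i<N. f i) = f j + (\<Sum>i\<in>{..<N}-{j}. f i)" using j by (simp add: sum.remove)
      have fj: "f j \<ge> 1" using f1 j by auto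
      have frest0: "(\<Sum>i\<in>{..<N}-{j}. f i) \<ge> 0" using f0 by (intro sum_nonneg) auto
      have frest: "(\<Sum>i\<in>{..<N}-{j}. f i) = 0" and fj1: "f j = 1" using sfj sf fj frest0 by linarith+
      have fi0: "\<forall>i\<in>{..<N}-{j}. f i = 0"
        using frest f0 by (subst (asm) sum_nonneg_eq_0_iff) auto
      have rest0: "\<forall>i<N. i \<noteq> j \<longrightarrow> n i = 0 \<and> m i = 1"
      proof (intro allI impI)
        fix i assume i: "i < N" "i \<noteq> j"
        have "f i = 0" using fi0 i by auto
        then have "n i = 0" using f1 i by force
        then show "n i = 0 \<and> m i = 1" using perA i by auto
      qed
      have rest: "\<forall>i<N. i \<noteq> j \<longrightarrow> n i = 0 \<and> T i = a i - 2"
      proof (intro allI impI)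
        fix i assume i: "i < N" "i \<noteq> j"
        then have "n i = 0" "m i = 1" using rest0 by auto
        then show "n i = 0 \<and> T i = a i - 2" using am i by auto
      qed
      have mj: "m j = n j" using fj1 unfolding f_def using perB j by auto
      have snj: "(\<Sum>i<N. n i) = n j + (\<Sum>i\<in>{..<N}-{j}. n i)" using j by (simp add: sum.remove)
      have "(\<Sum>i\<in>{..<N}-{j}. n i) = 0" using rest0 by (intro sum.neutral) auto
      then have njk: "n j + 2 = k" using snj sn q2 by simp
      have h: "int (a j) * int (n j) \<le> int (n j) + 2 * int (a j) - 2" using intam intT j q2 mj by force
      have "(int (a j) - 1) * (int (n j) - 2) \<le> 0" using h by (simp add: algebra_simps)
      moreover have "int (a j) \<ge> 3" using a j by auto
      ultimately have "int (n j) \<le> 2"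
        using mult_pos_pos[of "int (a j) - 1" "int (n j) - 2"] by linarith
      then have nj: "n j = 2" and k4: "k = 4" using njk k by auto
      have Tj: "T j = 2 * (a j - 2)" using am j mj nj by auto
      show ?thesis using k4 j nj q2 Tj rest by auto
    qed
  qed
qed


lemma sum_mset_swap: "(\<Sum>i\<in>A. \<Sum>r\<in>#G. f r i) = (\<Sum>r\<in>#G. \<Sum>i\<in>A. f r i)"
  by (induction G) (simp_all add: sum.distrib)

lemma mem_le_sum_mset: "x \<in># G \<Longrightarrow> (f x :: nat) \<le> (\<Sum>r\<in>#G. f r)"
  by (metis le_add1 multi_member_split sum_mset.insert image_mset_add_mset)

lemma vsz0: "r \<in> fbasis N a \<Longrightarrow> vsz N r = 0 \<Longrightarrow> r = funit"
  by (auto simp: vsz_def fbasis_def funit_def fun_eq_iff)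
     (metis lessThan_iff not_le)

lemma support_shape:
  assumes N: "N \<ge> 1" and a: "\<forall>i<N. a i > 2"
    and MS: "set_mset M \<subseteq> fbasis N a" and k: "size M \<ge> 4"
    and nu: "funit \<notin># M" and U2: "size (filter_mset (\<lambda>r. 2 \<le> vsz N r) M) \<le> 2"
    and dim: "(\<Sum>r\<in>#M. fdeg N a r) = fchat N a + of_nat (size M) - 3"
    and sel: "\<forall>i<N. a i dvd (\<Sum>r\<in>#M. r i) + 2"
  shows "\<exists>j<N. \<exists>u v. u \<in> fbasis N a \<and> v \<in> fbasis N a \<and> u j = a j - 2 \<and> v j = a j - 2 \<and>
           (\<forall>i<N. i \<noteq> j \<longrightarrow> u i + v i = a i - 2) \<and> M = {#fxpow j 1, fxpow j 1, u, v#}"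
proof -
  define G where "G = filter_mset (\<lambda>r. vsz N r < 2) M"
  define U where "U = filter_mset (\<lambda>r. 2 \<le> vsz N r) M"
  have MGU: "M = G + U" unfolding G_def U_def
    using multiset_partition[of M "\<lambda>r. vsz N r < 2"] by (simp add: not_less)
  define q where "q = size U"
  define k where "k = size M"
  define n where "n i = (\<Sum>r\<in>#G. r i)" for i
  define T where "T i = (\<Sum>r\<in>#U. r i)" for i
  define Sm where "Sm i = (\<Sum>r\<in>#M. r i)" for i
  have GS: "set_mset G \<subseteq> fbasis N a" and US: "set_mset U \<subseteq> fbasis N a"
    using MS unfolding G_def U_def by auto
  have gen1: "\<forall>r\<in>#G. vsz N r = 1"
  proof
    fix r assume r: "r \<in># G"
    have "r \<in># M" "vsz N r < 2" using r unfolding G_def by auto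
    moreover have "vsz N r \<noteq> 0" using vsz0[of r N a] MS nu \<open>r \<in># M\<close> by auto
    ultimately show "vsz N r = 1" by linarith
  qed
  have sn: "(\<Sum>i<N. n i) = size G"
  proof -
    have "(\<Sum>i<N. n i) = (\<Sum>r\<in>#G. vsz N r)" unfolding n_def vsz_def by (rule sum_mset_swap)
    also have "\<dots> = (\<Sum>r\<in>#G. 1)" by (rule arg_cong[where f=sum_mset], rule image_mset_cong) (use gen1 in auto)
    also have "\<dots> = size G" by (simp add: sum_mset_constant)
    finally show ?thesis .
  qed
  have Tb: "\<forall>i<N. T i \<le> q * (a i - 2)"
  proof (intro allI impI)
    fix i assume i: "i < N"
    have "T i \<le> (\<Sum>r\<in>#U. a i - 2)" unfolding T_def
      using US i by (intro sum_mset_mono) (auto simp: fbasis_def)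
    then show "T i \<le> q * (a i - 2)" by (simp add: sum_mset_constant q_def)
  qed
  have Smi: "Sm i = n i + T i" for i unfolding Sm_def n_def T_def MGU by simp
  define m where "m i = (Sm i + 2) div a i" for i
  have am: "\<forall>i<N. a i * m i = n i + T i + 2"
    using sel unfolding m_def Sm_def[symmetric] by (auto simp: Smi)
  have sq: "q \<le> 2" using U2 unfolding q_def U_def .
  have snq: "(\<Sum>i<N. n i) + q = k" unfolding sn q_def k_def MGU by simp
  have sm: "(\<Sum>i<N. m i) + 3 = N + k"
  proof -
    have fd: "(\<Sum>r\<in>#M. fdeg N a r) = (\<Sum>i<N. of_nat (Sm i) / of_nat (a i))"
    proof -
      have "(\<Sum>r\<in>#M. fdeg N a r) = (\<Sum>r\<in>#M. \<Sum>i<N. of_nat (r i) / (of_nat (a i) :: rat))"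
        unfolding fdeg_def by simp
      also have "\<dots> = (\<Sum>i<N. \<Sum>r\<in>#M. of_nat (r i) / (of_nat (a i) :: rat))"
        by (rule sum_mset_swap[symmetric])
      also have "\<dots> = (\<Sum>i<N. of_nat (Sm i) / of_nat (a i))"
      proof (rule sum.cong[OF refl])
        fix i
        have "(\<Sum>r\<in>#M. of_nat (r i) / (of_nat (a i) :: rat)) = (\<Sum>r\<in>#M. of_nat (r i)) / of_nat (a i)"
          by (induction M) (simp_all add: add_divide_distrib)
        also have "(\<Sum>r\<in>#M. of_nat (r i) :: rat) = of_nat (Sm i)"
          unfolding Sm_def of_nat_sum_mset by (simp add: multiset.map_comp comp_def)
        finally show "(\<Sum>r\<in>#M. of_nat (r i) / (of_nat (a i) :: rat)) = of_nat (Sm i) / of_nat (a i)" .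
      qed
      finally show ?thesis .
    qed
    have mq: "\<forall>i<N. (of_nat (m i) :: rat) = (of_nat (Sm i) + 2) / of_nat (a i)"
    proof (intro allI impI)
      fix i assume i: "i < N"
      have "a i * m i = Sm i + 2" using am i Smi by simp
      then have "(of_nat (a i) :: rat) * of_nat (m i) = of_nat (Sm i) + 2" by (metis of_nat_add of_nat_mult of_nat_numeral)
      moreover have "(of_nat (a i) :: rat) \<noteq> 0" using a i by auto
      ultimately show "(of_nat (m i) :: rat) = (of_nat (Sm i) + 2) / of_nat (a i)"
        by (simp add: field_simps)
    qed
    have "(of_nat (\<Sum>i<N. m i) :: rat) = (\<Sum>i<N. (of_nat (Sm i) + 2) / of_nat (a i))"
      using mq by simp
    also have "\<dots> = (\<Sum>i<N. of_nat (Sm i) / of_nat (a i)) + (\<Sum>i<N. 2 / (of_nat (a i) :: rat))"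
      by (simp add: add_divide_distrib sum.distrib)
    also have "\<dots> = fchat N a + of_nat k - 3 + (\<Sum>i<N. 2 / (of_nat (a i) :: rat))"
      using dim fd k_def by simp
    also have "\<dots> = of_nat N + of_nat k - 3"
      unfolding fchat_def by (simp add: sum_subtractf)
    finally have "(of_nat (\<Sum>i<N. m i) :: rat) + 3 = of_nat N + of_nat k" by simp
    then have "(of_nat ((\<Sum>i<N. m i) + 3) :: rat) = of_nat (N + k)" by simp
    then show ?thesis by (simp only: of_nat_eq_iff)
  qed
  have a3: "\<forall>i<N. a i \<ge> 3" using a by auto
  have kk: "k \<ge> 4" using k k_def by simp
  from arith_core[OF N a3 am Tb sq snq sm kk]
  obtain j where j: "j < N" and nj: "n j = 4 - q" and Tj: "T j = q * (a j - 2)"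
    and aj: "q < 2 \<longrightarrow> a j = 3" and rest: "\<forall>i<N. i \<noteq> j \<longrightarrow> n i = 0 \<and> T i = a i - 2"
    by blast
  let ?ej = "fxpow j 1"
  have Gej: "\<forall>r\<in>#G. r = ?ej"
  proof
    fix r assume r: "r \<in># G"
    have rS: "r \<in> fbasis N a" using r GS by auto
    have r0: "\<forall>i<N. i \<noteq> j \<longrightarrow> r i = 0"
    proof (intro allI impI)
      fix i assume "i < N" "i \<noteq> j"
      then have "n i = 0" using rest by auto
      moreover have "r i \<le> n i" unfolding n_def using r by (rule mem_le_sum_mset)
      ultimately show "r i = 0" by simp
    qed
    have "vsz N r = r j + (\<Sum>i\<in>{..<N}-{j}. r i)" unfolding vsz_def using j by (simp add: sum.remove)
    also have "(\<Sum>i\<in>{..<N}-{j}. r i) = 0" using r0 by (intro sum.neutral) auto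
    finally have "r j = 1" using gen1 r by simp
    show "r = ?ej"
    proof
      fix i show "r i = ?ej i"
        using \<open>r j = 1\<close> r0 rS by (cases "i < N") (auto simp: fxpow_def fbasis_def)
    qed
  qed
  have sG: "size G = 4 - q"
  proof -
    have "(\<Sum>i<N. n i) = n j + (\<Sum>i\<in>{..<N}-{j}. n i)" using j by (simp add: sum.remove)
    also have "(\<Sum>i\<in>{..<N}-{j}. n i) = 0" using rest by (intro sum.neutral) auto
    finally show ?thesis using sn nj by simp
  qed
  have Grep: "G = replicate_mset (4 - q) ?ej"
    using set_mset_subset_singletonD[of G ?ej] Gej sG by auto
  have ejS: "?ej \<in> fbasis N a" using j a by (auto simp: fbasis_def fxpow_def)
  show ?thesis
  proof (cases "q = 2")
    case True
    then have "size U = 2" using q_def by simp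
    then obtain u U1 where U1: "U = add_mset u U1" using size_eq_Suc_imp_eq_union[of U 1] by auto
    then have "size U1 = 1" using \<open>size U = 2\<close> by simp
    then obtain v U2 where U2: "U1 = add_mset v U2" using size_eq_Suc_imp_eq_union[of U1 0] by auto
    then have "U2 = {#}" using \<open>size U1 = 1\<close> by simp
    then have Uuv: "U = {#u, v#}" using U1 U2 by simp
    have uS: "u \<in> fbasis N a" and vS: "v \<in> fbasis N a" using US Uuv by auto
    have Tuv: "T i = u i + v i" for i unfolding T_def Uuv by simp
    have "u j + v j = 2 * (a j - 2)" using Tj True Tuv by simp
    moreover have "u j \<le> a j - 2" "v j \<le> a j - 2" using uS vS j by (auto simp: fbasis_def)
    ultimately have uj: "u j = a j - 2" and vj: "v j = a j - 2" by auto
    have M: "M = {#?ej, ?ej, u, v#}" using MGU Grep Uuv True by (simp add: numeral_2_eq_2)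
    show ?thesis using j uS vS uj vj rest Tuv M by (intro exI[of _ j]) auto
  next
    case q2: False
    show ?thesis
    proof (cases "q = 1")
      case True
      then have "size U = 1" using q_def by simp
      then obtain u U1 where U1: "U = add_mset u U1" using size_eq_Suc_imp_eq_union[of U 0] by auto
      then have "U1 = {#}" using \<open>size U = 1\<close> by simp
      then have Uu: "U = {#u#}" using U1 by simp
      have uS: "u \<in> fbasis N a" using US Uu by auto
      have Tu: "T i = u i" for i unfolding T_def Uu by simp
      have aj3: "a j = 3" using aj True by simp
      have M: "M = {#?ej, ?ej, ?ej, u#}" using MGU Grep Uu True by (simp add: numeral_3_eq_3)
      have uj: "u j = a j - 2" using Tj Tu True by simp
      have "?ej j = a j - 2" using aj3 by (simp add: fxpow_def)
      moreover have "\<forall>i<N. i \<noteq> j \<longrightarrow> ?ej i + u i = a i - 2" using rest Tu by (auto simp: fxpow_def)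
      ultimately show ?thesis using j ejS uS uj M by (intro exI[of _ j]) auto
    next
      case False
      then have q0: "q = 0" using sq q2 by auto
      then have "U = {#}" using q_def by simp
      have aj3: "a j = 3" using aj q0 by simp
      have M: "M = {#?ej, ?ej, ?ej, ?ej#}" using MGU Grep \<open>U = {#}\<close> q0 by (simp add: numeral_eq_Suc)
      have T0: "T i = 0" for i unfolding T_def using \<open>U = {#}\<close> by simp
      have "?ej j = a j - 2" using aj3 by (simp add: fxpow_def)
      moreover have "\<forall>i<N. i \<noteq> j \<longrightarrow> ?ej i + ?ej i = a i - 2" using rest T0 by (auto simp: fxpow_def)
      ultimately show ?thesis using j ejS M by (intro exI[of _ j]) auto
    qed
  qed
qed

lemma ineq1: "(f::nat) \<ge> 1 \<Longrightarrow> A \<ge> f+1 \<Longrightarrow> b \<ge> f+1 \<Longrightarrow>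
   A^2 + b^2 + (f+1)^2 < (A+b)^2 + 1^2 + f^2"
proof -
  assume h: "f \<ge> 1" "A \<ge> f+1" "b \<ge> f+1"
  have "1 * (f+1) \<le> A * b" using h by (intro mult_mono) auto
  then show ?thesis by (simp add: power2_eq_square algebra_simps)
qed
lemma ineq2: "(f::nat) \<ge> 1 \<Longrightarrow> A \<ge> f+1 \<Longrightarrow>
   A^2 + b^2 + (f+1)^2 < (A+1)^2 + b^2 + f^2"
  by (simp add: power2_eq_square algebra_simps)
lemma ineq3: "(f::nat) \<ge> 1 \<Longrightarrow> b \<ge> f+1 \<Longrightarrow>
   A^2 + b^2 + (f+1)^2 < A^2 + 1^2 + (b+f)^2"
proof -
  assume h: "f \<ge> 1" "b \<ge> f+1"
  have "1 * f < b * f" using h by (intro mult_strict_right_mono) auto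
  then have X: "f < b * f" by simp
  have e1: "(b+f)^2 = b^2 + f^2 + 2*(b*f)" by (simp add: power2_sum)
  have e2: "(f+1)^2 = f^2 + 2*f + 1" by (simp only: power2_sum) simp
  show ?thesis using X e1 e2 by linarith
qed

definition sumsq :: "nat \<Rightarrow> (nat \<Rightarrow> nat) multiset \<Rightarrow> nat" where
  "sumsq N M = (\<Sum>r\<in>#M. (vsz N r)^2)"

lemma vsz_vadd: "vsz N (vadd x y) = vsz N x + vsz N y"
  by (simp add: vsz_def vadd_def sum.distrib)

lemma vsz_fxpow1: "i < N \<Longrightarrow> vsz N (fxpow i 1) = 1"
  by (simp add: vsz_def fxpow_def)

lemma sumsq_add: "sumsq N (mset xs + {#x, y, z#}) = sumsq N (mset xs) + (vsz N x)^2 + (vsz N y)^2 + (vsz N z)^2"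
  by (simp add: sumsq_def)

lemma vsz_le: "r \<in> fbasis N a \<Longrightarrow> vsz N r \<le> (\<Sum>i<N. a i)"
  unfolding vsz_def by (intro sum_mono) (auto simp: fbasis_def intro: order_trans)

lemma sumsq_le: "set_mset M \<subseteq> fbasis N a \<Longrightarrow> sumsq N M \<le> size M * (\<Sum>i<N. a i)^2"
proof -
  assume h: "set_mset M \<subseteq> fbasis N a"
  have "sumsq N M \<le> (\<Sum>r\<in>#M. (\<Sum>i<N. a i)^2)" unfolding sumsq_def
    using h vsz_le by (intro sum_mset_mono power_mono) auto
  then show ?thesis by (simp add: sum_mset_constant)
qed

lemma string0: "fermat_g0_system N a c corr \<Longrightarrow> set_mset M \<subseteq> fbasis N a \<Longrightarrow> size M \<ge> 4 \<Longrightarrow>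
   funit \<in># M \<Longrightarrow> corr M = 0"
proof -
  assume sys: "fermat_g0_system N a c corr" and MS: "set_mset M \<subseteq> fbasis N a" and k: "size M \<ge> 4"
    and u: "funit \<in># M"
  obtain M' where M': "M = add_mset funit M'" using u by (metis insert_DiffM)
  have "set_mset M' \<subseteq> fbasis N a" "size M' \<ge> 3" using MS k M' by auto
  then show "corr M = 0" using sys M' unfolding fermat_g0_system_def by blast
qed

lemma step:
  assumes N: "N \<ge> 1" and a: "\<forall>i<N. a i > 2" and c: "c \<noteq> 0"
    and sys1: "fermat_g0_system N a c corr1" and sys2: "fermat_g0_system N a c corr2"
    and hyp: "\<forall>j<N. corr1 {#fxpow j 1, fxpow j 1, fxpow j (a j - 2), ftop N a#}
               = corr2 {#fxpow j 1, fxpow j 1, fxpow j (a j - 2), ftop N a#}"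
    and k: "k \<ge> 4"
    and IH: "\<forall>M. set_mset M \<subseteq> fbasis N a \<and> 3 \<le> size M \<and> size M < k \<longrightarrow> corr1 M = corr2 M"
  shows "\<forall>M. set_mset M \<subseteq> fbasis N a \<and> size M = k \<longrightarrow> corr1 M = corr2 M"
proof -
  define B where "B = k * (\<Sum>i<N. a i)^2"
  have main: "\<And>M. B - sumsq N M = d \<Longrightarrow> set_mset M \<subseteq> fbasis N a \<Longrightarrow> size M = k \<Longrightarrow> corr1 M = corr2 M" for d
  proof (induction d rule: less_induct)
    case (less d M)
    note MS = less.prems(2) and Mk = less.prems(3)
    have IHm: "\<And>M'. set_mset M' \<subseteq> fbasis N a \<Longrightarrow> size M' = k \<Longrightarrow> sumsq N M < sumsq N M' \<Longrightarrow> corr1 M' = corr2 M'"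
    proof -
      fix M' assume h: "set_mset M' \<subseteq> fbasis N a" "size M' = k" "sumsq N M < sumsq N M'"
      have "sumsq N M' \<le> B" using sumsq_le[OF h(1)] h(2) unfolding B_def by simp
      then have "B - sumsq N M' < d" using h(3) less.prems(1) by linarith
      then show "corr1 M' = corr2 M'" using less.IH h(1,2) by blast
    qed
    show ?case
    proof (cases "funit \<in># M")
      case True
      then show ?thesis using string0[OF sys1 MS] string0[OF sys2 MS] Mk k by simp
    next
      case nu: False
      show ?thesis
      proof (cases "(\<Sum>r\<in>#M. fdeg N a r) = fchat N a + of_nat (size M) - 3 \<and> (\<forall>i<N. a i dvd (\<Sum>r\<in>#M. r i) + 2)")
        case False
        have "corr1 M = 0" using False sys1 MS Mk k unfolding fermat_g0_system_def by auto
        moreover have "corr2 M = 0" using False sys2 MS Mk k unfolding fermat_g0_system_def by auto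
        ultimately show ?thesis by simp
      next
        case sup: True
        show ?thesis
        proof (cases "size (filter_mset (\<lambda>r. 2 \<le> vsz N r) M) \<le> 2")
          case True
          from support_shape[OF N a MS _ nu True] sup Mk k
          obtain j u v where j: "j < N" and uS: "u \<in> fbasis N a" and vS: "v \<in> fbasis N a"
            and uj: "u j = a j - 2" and vj: "v j = a j - 2" and uv: "\<forall>i<N. i \<noteq> j \<longrightarrow> u i + v i = a i - 2"
            and M: "M = {#fxpow j 1, fxpow j 1, u, v#}" by auto
          have "corr1 M - corr2 M = corr1 {#fxpow j 1, fxpow j 1, fxpow j (a j - 2), ftop N a#}
              - corr2 {#fxpow j 1, fxpow j 1, fxpow j (a j - 2), ftop N a#}"
            unfolding M using chain[OF sys1 sys2 c a j, rule_format, OF refl uS vS uj vj] uv by blast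
          then show ?thesis using hyp j by simp
        next
          case False
          define U where "U = filter_mset (\<lambda>r. 2 \<le> vsz N r) M"
          have U3: "size U \<ge> 3" using False U_def by simp
          have Une: "U \<noteq> {#}" using U3 by auto
          define mn where "mn = Min (vsz N ` set_mset U)"
          have "mn \<in> vsz N ` set_mset U" unfolding mn_def using Une by (intro Min_in) auto
          then obtain ps where psU: "ps \<in># U" and psmn: "vsz N ps = mn" by auto
          have psmin: "\<And>r. r \<in># U \<Longrightarrow> vsz N ps \<le> vsz N r"
            unfolding psmn mn_def by (intro Min_le) auto
          obtain U1 where U1: "U = add_mset ps U1" using psU by (metis insert_DiffM)
          have "size U1 \<ge> 2" using U3 U1 by simp
          then have "U1 \<noteq> {#}" by auto
          then obtain al where "al \<in># U1" by auto
          then obtain U2 where U2: "U1 = add_mset al U2" by (metis insert_DiffM)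
          have "size U2 \<ge> 1" using U3 U1 U2 by simp
          then have "U2 \<noteq> {#}" by auto
          then obtain be where "be \<in># U2" by auto
          then obtain U3' where U3': "U2 = add_mset be U3'" by (metis insert_DiffM)
          have alU: "al \<in># U" and beU: "be \<in># U" using U1 U2 U3' by auto
          have UM: "U \<subseteq># M" unfolding U_def by (rule multiset_filter_subset)
          define rest where "rest = U3' + (M - U)"
          have e1: "U + (M - U) = M" using UM by (rule subset_mset.add_diff_inverse)
          have e2: "U = U3' + {#al, be, ps#}" using U1 U2 U3' by (simp add: add_mset_commute)
          have "rest + {#al, be, ps#} = (U3' + {#al, be, ps#}) + (M - U)"
            unfolding rest_def by (simp only: ac_simps)
          also have "\<dots> = M" using e1 e2 by simp
          finally have Mrest: "M = rest + {#al, be, ps#}" by simp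
          obtain xs where xs: "mset xs = rest" using ex_mset by blast
          have Mxs: "M = mset xs + {#al, be, ps#}" using Mrest xs by simp
          have lxs: "length xs + 3 = k" using Mk Mxs by (metis size_mset size_union size_add_mset size_empty add.commute
                 numeral_3_eq_3 add_Suc_right add_0_right)
          have xsne: "xs \<noteq> []" using lxs k by auto
          have xsS: "set xs \<subseteq> fbasis N a" using MS Mxs by auto
          have alS: "al \<in> fbasis N a" and beS: "be \<in> fbasis N a" and psS: "ps \<in> fbasis N a"
            using MS Mxs by auto
          have ps2: "vsz N ps \<ge> 2" using psU U_def by auto
          have alg: "vsz N al \<ge> vsz N ps" "vsz N be \<ge> vsz N ps" using psmin alU beU by auto
          obtain i where i: "i < N" "ps i \<ge> 1"
          proof -
            have "\<exists>i<N. ps i \<ge> 1"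
            proof (rule ccontr)
              assume "\<not> (\<exists>i<N. ps i \<ge> 1)"
              then have "vsz N ps = 0" unfolding vsz_def by (intro sum.neutral) auto
              then show False using ps2 by simp
            qed
            then show ?thesis using that by blast
          qed
          define ph where "ph = ps(i := ps i - 1)"
          let ?ei = "fxpow i 1"
          have eiS: "?ei \<in> fbasis N a" using i a by (auto simp: fbasis_def fxpow_def)
          have phS: "ph \<in> fbasis N a" using psS by (auto simp: ph_def fbasis_def)
          have pseq: "vadd ?ei ph = ps" using i by (auto simp: vadd_def ph_def fxpow_def fun_eq_iff)
          have vph: "vsz N ps = vsz N ph + 1" using pseq vsz_vadd[of N ?ei ph] vsz_fxpow1[OF i(1)] by simp
          have IHx: "\<forall>M. set_mset M \<subseteq> fbasis N a \<and> 3 \<le> size M \<and> size M < length xs + 3 \<longrightarrow> corr1 M = corr2 M"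
            using IH lxs by simp
          have r: "Qd N a corr1 corr2 xs (vadd al be) ?ei ph + Qd N a corr1 corr2 xs al be (vadd ?ei ph) =
                   Qd N a corr1 corr2 xs (vadd al ?ei) be ph + Qd N a corr1 corr2 xs al ?ei (vadd be ph)"
            by (rule rel[OF sys1 sys2 c xsne xsS alS beS eiS phS IHx])
          have Qz: "\<And>x y z. (x \<in> fbasis N a \<Longrightarrow> y \<in> fbasis N a \<Longrightarrow> z \<in> fbasis N a \<Longrightarrow>
                     sumsq N M < sumsq N (mset xs + {#x, y, z#})) \<Longrightarrow> Qd N a corr1 corr2 xs x y z = 0"
          proof -
            fix x y z
            assume h: "x \<in> fbasis N a \<Longrightarrow> y \<in> fbasis N a \<Longrightarrow> z \<in> fbasis N a \<Longrightarrow>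
                     sumsq N M < sumsq N (mset xs + {#x, y, z#})"
            show "Qd N a corr1 corr2 xs x y z = 0"
            proof (cases "x \<in> fbasis N a \<and> y \<in> fbasis N a \<and> z \<in> fbasis N a")
              case True
              have "corr1 (mset xs + {#x, y, z#}) = corr2 (mset xs + {#x, y, z#})"
                using IHm[of "mset xs + {#x, y, z#}"] h True xsS lxs by auto
              then show ?thesis unfolding Qd_def by simp
            qed (auto simp: Qd_def)
          qed
          have sM: "sumsq N M = sumsq N (mset xs) + (vsz N al)^2 + (vsz N be)^2 + (vsz N ps)^2"
            unfolding Mxs by (rule sumsq_add)
          have f1: "vsz N ph \<ge> 1" using vph ps2 by simp
          have A1: "vsz N al \<ge> vsz N ph + 1" "vsz N be \<ge> vsz N ph + 1" using alg vph by auto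
          have q1: "Qd N a corr1 corr2 xs (vadd al be) ?ei ph = 0"
            using ineq1[OF f1 A1] by (intro Qz, subst sumsq_add) (simp add: sM vsz_vadd vsz_fxpow1[OF i(1)] vsz_fxpow1[OF i(1), simplified] vph)
          have q2: "Qd N a corr1 corr2 xs (vadd al ?ei) be ph = 0"
            using ineq2[OF f1 A1(1)] by (intro Qz, subst sumsq_add) (simp add: sM vsz_vadd vsz_fxpow1[OF i(1)] vsz_fxpow1[OF i(1), simplified] vph)
          have q3: "Qd N a corr1 corr2 xs al ?ei (vadd be ph) = 0"
            using ineq3[OF f1 A1(2)] by (intro Qz, subst sumsq_add) (simp add: sM vsz_vadd vsz_fxpow1[OF i(1)] vsz_fxpow1[OF i(1), simplified] vph)
          have "Qd N a corr1 corr2 xs al be ps = 0" using r q1 q2 q3 pseq by simp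
          then show ?thesis using alS beS psS unfolding Qd_def Mxs by simp
        qed
      qed
    qed
  qed
  show ?thesis using main by blast
qed

theorem proposition4p7:
  fixes N :: nat and a :: "nat \<Rightarrow> nat" and c :: complex
    and corr1 corr2 :: "(nat \<Rightarrow> nat) multiset \<Rightarrow> complex"
  assumes "N \<ge> 1"
    and "\<forall>i<N. a i > 2"
    and "c \<noteq> 0"
    and "fermat_g0_system N a c corr1"
    and "fermat_g0_system N a c corr2"
    and "\<forall>j<N. corr1 {#fxpow j 1, fxpow j 1, fxpow j (a j - 2), ftop N a#}
               = corr2 {#fxpow j 1, fxpow j 1, fxpow j (a j - 2), ftop N a#}"
  shows "\<forall>M. set_mset M \<subseteq> fbasis N a \<and> size M \<ge> 3 \<longrightarrow> corr1 M = corr2 M"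
proof -
  have "\<forall>M. set_mset M \<subseteq> fbasis N a \<and> 3 \<le> size M \<and> size M < k \<longrightarrow> corr1 M = corr2 M" for k
  proof (induction k)
    case 0
    then show ?case by simp
  next
    case (Suc k)
    show ?case
    proof (cases "k \<le> 3")
      case True
      show ?thesis
      proof (intro allI impI)
        fix M assume h: "set_mset M \<subseteq> fbasis N a \<and> 3 \<le> size M \<and> size M < Suc k"
        then have "size M = 3" using True by simp
        then show "corr1 M = corr2 M" using size3_eq[OF assms(4,5)] h by blast
      qed
    next
      case False
      have st: "\<forall>M. set_mset M \<subseteq> fbasis N a \<and> size M = k \<longrightarrow> corr1 M = corr2 M"
        using step[OF assms(1,2,3,4,5,6) _ Suc.IH] False by simp
      show ?thesis using Suc.IH st by (metis less_Suc_eq)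
    qed
  qed
  then show ?thesis by (metis lessI)
qed

end
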